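(* Let $R$ be a commutative Bézout ring and let $0\neq c\in R$. Consider: (1) for any $a,b\in R$ with $aR+bR=R$, there exist $r,s\in R$ such that $c=rs$ and $rR+sR=rR+aR=sR+bR=R$; (2) the ring $R/cR$ is clean. Then (1) implies (2). If moreover $R$ is an integral domain, then (1) and (2) are equivalent.
   Context: All rings are commutative with identity. A ring is Bézout if every finitely generated ideal is principal. A ring is clean if every element is the sum of an idempotent and a unit. *)

theory Defs
  imports "HOL-Algebra.Algebra"
begin

definition bezout_ring :: "('a, 'b) ring_scheme \<Rightarrow> bool" where
  "bezout_ring R \<longleftrightarrow> cring R \<and>
     (\<forall>S. finite S \<and> S \<subseteq> carrier R \<longrightarrow>
        (\<exists>d \<in> carrier R. genideal R S = cgenideal R d))"

definition clean_ring :: "('a, 'b) ring_scheme \<Rightarrow> bool" where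
  "clean_ring R \<longleftrightarrow>
     (\<forall>x \<in> carrier R. \<exists>e \<in> carrier R. \<exists>u \<in> Units R.
        e \<otimes>\<^bsub>R\<^esub> e = e \<and> x = e \<oplus>\<^bsub>R\<^esub> u)"

definition cond1 :: "('a, 'b) ring_scheme \<Rightarrow> 'a \<Rightarrow> bool" where
  "cond1 R c \<longleftrightarrow>
     (\<forall>a \<in> carrier R. \<forall>b \<in> carrier R.
        cgenideal R a <+>\<^bsub>R\<^esub> cgenideal R b = carrier R \<longrightarrow>
        (\<exists>r \<in> carrier R. \<exists>s \<in> carrier R. c = r \<otimes>\<^bsub>R\<^esub> s \<and>
            cgenideal R r <+>\<^bsub>R\<^esub> cgenideal R s = carrier R \<and>
            cgenideal R r <+>\<^bsub>R\<^esub> cgenideal R a = carrier R \<and>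
            cgenideal R s <+>\<^bsub>R\<^esub> cgenideal R b = carrier R))"

end

theory Submission
  imports Defs
begin

context cring
begin

lemma comb4:
  assumes h1: "LA = RA" and h2: "LB = RB" and h3: "LC = RC" and h4: "LD = RD"
    and id: "x \<ominus> y = cA \<otimes> (LA \<ominus> RA) \<oplus> cB \<otimes> (LB \<ominus> RB) \<oplus> cC \<otimes> (LC \<ominus> RC) \<oplus> cD \<otimes> (LD \<ominus> RD)"
    and c: "x \<in> carrier R" "y \<in> carrier R" "cA \<in> carrier R" "cB \<in> carrier R" "cC \<in> carrier R" "cD \<in> carrier R"
      "RA \<in> carrier R" "RB \<in> carrier R" "RC \<in> carrier R" "RD \<in> carrier R"
  shows "x = y"
proof -
  have "x \<ominus> y = \<zero>" using id c unfolding h1 h2 h3 h4 by (simp add: a_minus_def r_neg)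
  thus ?thesis using c by simp
qed

lemma sum_mem:
  assumes "a \<in> carrier R" "b \<in> carrier R" "x \<in> carrier R" "y \<in> carrier R"
  shows "x \<otimes> a \<oplus> y \<otimes> b \<in> PIdl a <+> PIdl b"
proof -
  have "x \<otimes> a \<in> PIdl a" "y \<otimes> b \<in> PIdl b" unfolding cgenideal_def using assms by blast+
  thus ?thesis unfolding set_add_def' by blast
qed

lemma comax_iff:
  assumes "a \<in> carrier R" "b \<in> carrier R"
  shows "(PIdl a <+> PIdl b = carrier R) \<longleftrightarrow> (\<exists>x\<in>carrier R. \<exists>y\<in>carrier R. x \<otimes> a \<oplus> y \<otimes> b = \<one>)"
proof
  assume "PIdl a <+> PIdl b = carrier R"
  hence "\<one> \<in> PIdl a <+> PIdl b" by simp
  thus "\<exists>x\<in>carrier R. \<exists>y\<in>carrier R. x \<otimes> a \<oplus> y \<otimes> b = \<one>"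
    by (auto simp: set_add_defs cgenideal_def) metis
next
  assume "\<exists>x\<in>carrier R. \<exists>y\<in>carrier R. x \<otimes> a \<oplus> y \<otimes> b = \<one>"
  then obtain x y where xy: "x \<in> carrier R" "y \<in> carrier R" "x \<otimes> a \<oplus> y \<otimes> b = \<one>" by blast
  have id: "ideal (PIdl a <+> PIdl b) R"
    by (rule add_ideals) (simp_all add: cgenideal_ideal assms)
  have "\<one> \<in> PIdl a <+> PIdl b"
    unfolding set_add_defs cgenideal_def using xy by force
  thus "PIdl a <+> PIdl b = carrier R" using ideal.one_imp_carrier[OF id] by blast
qed

lemma bez2:
  assumes "bezout_ring R" "x \<in> carrier R" "y \<in> carrier R"
  shows "\<exists>d\<in>carrier R. \<exists>p\<in>carrier R. \<exists>q\<in>carrier R. \<exists>k1\<in>carrier R. \<exists>k2\<in>carrier R.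
     d = p \<otimes> x \<oplus> q \<otimes> y \<and> x = k1 \<otimes> d \<and> y = k2 \<otimes> d"
proof -
  obtain d where d: "d \<in> carrier R" "Idl {x, y} = PIdl d"
    using assms unfolding bezout_ring_def by (metis empty_subsetI finite.emptyI finite_insert insert_subset)
  have x: "x \<in> PIdl d" and y: "y \<in> PIdl d" using d(2) genideal_self[of "{x,y}"] assms by auto
  have id: "ideal (PIdl x <+> PIdl y) R"
    by (rule add_ideals) (simp_all add: cgenideal_ideal assms)
  have "x \<in> PIdl x <+> PIdl y"
  proof -
    have "x = (\<one> \<otimes> x) \<oplus> (\<zero> \<otimes> y)" using assms by simp
    thus ?thesis using sum_mem[of x y \<one> \<zero>] assms by simp
  qed
  moreover have "y \<in> PIdl x <+> PIdl y"
  proof -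
    have "y = (\<zero> \<otimes> x) \<oplus> (\<one> \<otimes> y)" using assms by simp
    thus ?thesis using sum_mem[of x y \<zero> \<one>] assms by simp
  qed
  ultimately have "Idl {x, y} \<subseteq> PIdl x <+> PIdl y"
    by (intro genideal_minimal id) auto
  hence "d \<in> PIdl x <+> PIdl y" using d cgenideal_self by auto
  then obtain p q where "p \<in> carrier R" "q \<in> carrier R" "d = p \<otimes> x \<oplus> q \<otimes> y"
    unfolding set_add_defs cgenideal_def by auto
  with x y d show ?thesis unfolding cgenideal_def by blast
qed

lemma quot_carrier:
  assumes "c \<in> carrier R"
  shows "carrier (R Quot PIdl c) = (\<lambda>x. PIdl c +> x) ` carrier R"
  by (auto simp: FactRing_def A_RCOSETS_def RCOSETS_def a_r_coset_def)

lemma quot_eq: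
  assumes "c \<in> carrier R" "x \<in> carrier R" "y \<in> carrier R"
  shows "(PIdl c +> x = PIdl c +> y) \<longleftrightarrow> (\<exists>k\<in>carrier R. x \<ominus> y = k \<otimes> c)"
  using quotient_eq_iff_same_a_r_cos[OF cgenideal_ideal[OF assms(1)] assms(2,3)]
  by (auto simp: cgenideal_def)

lemma exch:
  assumes c: "Xa \<in> carrier R" "E \<in> carrier R" "U \<in> carrier R" "V \<in> carrier R" "F \<in> carrier R" "Ya \<in> carrier R"
    and h: "Xa = E \<oplus> U" "E \<otimes> E = E" "U \<otimes> V = \<one>" "F \<oplus> E = \<one>" "Ya \<oplus> Xa = \<one>"
  shows "F = Xa \<otimes> (F \<otimes> V)" "E = Ya \<otimes> (\<ominus> (E \<otimes> V))"
proof -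
  have "F = (E \<oplus> U) \<otimes> (F \<otimes> V)"
    apply (rule comb4[where cA = "V" and cB = "\<ominus> F" and cC = "\<ominus> (E \<otimes> V)" and cD = \<zero>, OF h(2) h(3) h(4) refl[of \<zero>]])
     apply (use c in algebra)
    using c by simp_all
  thus "F = Xa \<otimes> (F \<otimes> V)" using h(1) by simp
  have "E = (\<one> \<ominus> (E \<oplus> U)) \<otimes> (\<ominus> (E \<otimes> V))"
    apply (rule comb4[where cA = "\<ominus> V" and cB = "\<ominus> E" and cC = \<zero> and cD = \<zero>, OF h(2) h(3) refl[of \<zero>] refl[of \<zero>]])
     apply (use c in algebra)
    using c by simp_all
  moreover have "Ya = \<one> \<ominus> (E \<oplus> U)"
    unfolding h(1)[symmetric]
    apply (rule comb4[where cA = "\<one>" and cB = \<zero> and cC = \<zero> and cD = \<zero>, OF h(5) refl[of \<zero>] refl[of \<zero>] refl[of \<zero>]])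
     apply (use c in algebra)
    using c by simp_all
  ultimately show "E = Ya \<otimes> (\<ominus> (E \<otimes> V))" by simp
qed

lemma part1:
  assumes c: "c \<in> carrier R" and h1: "cond1 R c"
  shows "clean_ring (R Quot PIdl c)"
proof -
  let ?Q = "R Quot PIdl c"
  let ?h = "\<lambda>x. PIdl c +> x"
  have idl: "ideal (PIdl c) R" by (rule cgenideal_ideal[OF c])
  have hom: "?h \<in> ring_hom R ?Q" by (rule ideal.rcos_ring_hom[OF idl])
  have hc: "\<And>x. x \<in> carrier R \<Longrightarrow> ?h x \<in> carrier ?Q" using hom by (rule ring_hom_closed)
  have hm: "\<And>x y. x \<in> carrier R \<Longrightarrow> y \<in> carrier R \<Longrightarrow> ?h (x \<otimes> y) = ?h x \<otimes>\<^bsub>?Q\<^esub> ?h y"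
    using hom by (rule ring_hom_mult)
  have ha: "\<And>x y. x \<in> carrier R \<Longrightarrow> y \<in> carrier R \<Longrightarrow> ?h (x \<oplus> y) = ?h x \<oplus>\<^bsub>?Q\<^esub> ?h y"
    using hom by (rule ring_hom_add)
  have h1q: "?h \<one> = \<one>\<^bsub>?Q\<^esub>" using hom by (rule ring_hom_one)
  show ?thesis unfolding clean_ring_def
  proof
    fix Xq assume "Xq \<in> carrier ?Q"
    then obtain x where x: "x \<in> carrier R" "Xq = ?h x" using quot_carrier[OF c] by auto
    have cm: "PIdl x <+> PIdl (\<one> \<ominus> x) = carrier R"
    proof -
      have "\<one> \<otimes> x \<oplus> \<one> \<otimes> (\<one> \<ominus> x) = \<one>" using x by algebra
      hence "\<exists>a\<in>carrier R. \<exists>b\<in>carrier R. a \<otimes> x \<oplus> b \<otimes> (\<one> \<ominus> x) = \<one>" using one_closed by blast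
      thus ?thesis using comax_iff[OF x(1) minus_closed[OF one_closed x(1)]] by simp
    qed
    obtain r s where rs: "r \<in> carrier R" "s \<in> carrier R" "c = r \<otimes> s"
      "PIdl r <+> PIdl s = carrier R" "PIdl r <+> PIdl x = carrier R"
      "PIdl s <+> PIdl (\<one> \<ominus> x) = carrier R"
      using h1[unfolded cond1_def, rule_format, OF x(1) minus_closed[OF one_closed x(1)] cm] by blast
    obtain \<alpha> \<beta> where ab: "\<alpha> \<in> carrier R" "\<beta> \<in> carrier R" "\<alpha> \<otimes> r \<oplus> \<beta> \<otimes> s = \<one>"
      using rs(4) comax_iff[OF rs(1,2)] by blast
    obtain p q where pq: "p \<in> carrier R" "q \<in> carrier R" "p \<otimes> r \<oplus> q \<otimes> x = \<one>"
      using rs(5) comax_iff[OF rs(1) x(1)] by blast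
    obtain p' q' where pq': "p' \<in> carrier R" "q' \<in> carrier R" "p' \<otimes> s \<oplus> q' \<otimes> (\<one> \<ominus> x) = \<one>"
      using rs(6) comax_iff[OF rs(2) minus_closed[OF one_closed x(1)]] by blast
    define e where "e = \<alpha> \<otimes> r"
    define u where "u = x \<ominus> e"
    define v where "v = q \<otimes> \<beta> \<otimes> s \<ominus> q' \<otimes> \<alpha> \<otimes> r"
    define A where "A = p \<oplus> \<alpha> \<otimes> q"
    define B where "B = p' \<oplus> q' \<otimes> \<beta>"
    define K where "K = \<beta> \<otimes> A \<oplus> \<alpha> \<otimes> B"
    note carr = c x(1) rs(1,2) ab(1,2) pq(1,2) pq'(1,2)
    have ec: "e \<in> carrier R" and uc: "u \<in> carrier R" and vc: "v \<in> carrier R" and Kc: "K \<in> carrier R"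
      using carr by (simp_all add: e_def u_def v_def K_def A_def B_def)
    have idem: "e \<otimes> e \<ominus> e = (\<ominus> (\<alpha> \<otimes> \<beta>)) \<otimes> c"
      apply (rule comb4[where cA = "\<alpha> \<otimes> r" and cB = "\<alpha> \<otimes> \<beta>" and cC = \<zero> and cD = \<zero>, OF ab(3) rs(3) refl[of \<zero>] refl[of \<zero>]])
       apply (use carr in \<open>unfold e_def; algebra\<close>)
      using carr by (simp_all add: e_def)
    have Ac: "A \<in> carrier R" and Bc: "B \<in> carrier R" using carr by (simp_all add: A_def B_def)
    have ua: "u \<otimes> q = \<one> \<ominus> A \<otimes> r"
      apply (rule comb4[where cA = "\<one>" and cB = \<zero> and cC = \<zero> and cD = \<zero>, OF pq(3) refl[of \<zero>] refl[of \<zero>] refl[of \<zero>]])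
       apply (use carr in \<open>unfold u_def e_def A_def; algebra\<close>)
      using carr Ac by (simp_all add: e_def u_def)
    have ub: "(\<ominus> q') \<otimes> u = \<one> \<ominus> B \<otimes> s"
      apply (rule comb4[where cA = "\<one>" and cB = q' and cC = \<zero> and cD = \<zero>, OF pq'(3) ab(3) refl[of \<zero>] refl[of \<zero>]])
       apply (use carr in \<open>unfold u_def e_def B_def; algebra\<close>)
      using carr Bc by (simp_all add: e_def u_def)
    have "u \<otimes> v = (u \<otimes> q) \<otimes> (\<beta> \<otimes> s) \<oplus> ((\<ominus> q') \<otimes> u) \<otimes> (\<alpha> \<otimes> r)"
      using carr uc unfolding v_def by algebra
    hence uv: "u \<otimes> v = (\<one> \<ominus> A \<otimes> r) \<otimes> (\<beta> \<otimes> s) \<oplus> (\<one> \<ominus> B \<otimes> s) \<otimes> (\<alpha> \<otimes> r)"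
      unfolding ua ub .
    have unit: "u \<otimes> v \<ominus> \<one> = (\<ominus> K) \<otimes> c"
      apply (rule comb4[where cA = "\<one>" and cB = "\<one>" and cC = K and cD = \<zero>, OF uv ab(3) rs(3) refl[of \<zero>]])
       apply (use carr uc vc Ac Bc in \<open>unfold K_def; algebra\<close>)
      using carr uc vc Kc Ac Bc by simp_all
    have kc1: "\<ominus> (\<alpha> \<otimes> \<beta>) \<in> carrier R" using carr by simp
    have "?h (e \<otimes> e) = ?h e" using quot_eq[OF c m_closed[OF ec ec] ec] idem kc1 by blast
    hence E: "?h e \<otimes>\<^bsub>?Q\<^esub> ?h e = ?h e" using hm ec by simp
    have kc2: "\<ominus> K \<in> carrier R" using Kc by simp
    have "?h (u \<otimes> v) = ?h \<one>" using quot_eq[OF c m_closed[OF uc vc] one_closed] unit kc2 by blast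
    hence U1: "?h u \<otimes>\<^bsub>?Q\<^esub> ?h v = \<one>\<^bsub>?Q\<^esub>" using hm uc vc h1q by simp
    have U2: "?h v \<otimes>\<^bsub>?Q\<^esub> ?h u = \<one>\<^bsub>?Q\<^esub>" using U1 hm[OF vc uc] hm[OF uc vc] m_comm[OF uc vc] by simp
    have Uu: "?h u \<in> Units ?Q" unfolding Units_def using U1 U2 hc uc vc by blast
    have "x = e \<oplus> u" using carr ec unfolding u_def by algebra
    hence "Xq = ?h e \<oplus>\<^bsub>?Q\<^esub> ?h u" using x ha ec uc by simp
    thus "\<exists>e\<in>carrier ?Q. \<exists>u\<in>Units ?Q. e \<otimes>\<^bsub>?Q\<^esub> e = e \<and> Xq = e \<oplus>\<^bsub>?Q\<^esub> u"
      using E Uu hc ec by blast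
  qed
qed

lemma part2:
  assumes c: "c \<in> carrier R" and c0: "c \<noteq> \<zero>" and dom: "domain R"
    and bz: "bezout_ring R" and cl: "clean_ring (R Quot PIdl c)"
  shows "cond1 R c"
  unfolding cond1_def
proof (intro ballI impI)
  fix a b assume a: "a \<in> carrier R" and b: "b \<in> carrier R"
    and sab: "PIdl a <+> PIdl b = carrier R"
  obtain \<alpha> \<beta> where ab: "\<alpha> \<in> carrier R" "\<beta> \<in> carrier R" "\<alpha> \<otimes> a \<oplus> \<beta> \<otimes> b = \<one>"
    using sab comax_iff[OF a b] by blast
  let ?Q = "R Quot PIdl c"
  let ?h = "\<lambda>x. PIdl c +> x"
  have idl: "ideal (PIdl c) R" by (rule cgenideal_ideal[OF c])
  have Qc: "cring ?Q" by (rule ideal.quotient_is_cring[OF idl is_cring])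
  have hom: "?h \<in> ring_hom R ?Q" by (rule ideal.rcos_ring_hom[OF idl])
  have homc: "ring_hom_cring R ?Q ?h" by (rule ideal.rcos_ring_hom_cring[OF idl is_cring])
  have hc: "\<And>x. x \<in> carrier R \<Longrightarrow> ?h x \<in> carrier ?Q" using hom by (rule ring_hom_closed)
  have hm: "\<And>x y. x \<in> carrier R \<Longrightarrow> y \<in> carrier R \<Longrightarrow> ?h (x \<otimes> y) = ?h x \<otimes>\<^bsub>?Q\<^esub> ?h y"
    using hom by (rule ring_hom_mult)
  have ha: "\<And>x y. x \<in> carrier R \<Longrightarrow> y \<in> carrier R \<Longrightarrow> ?h (x \<oplus> y) = ?h x \<oplus>\<^bsub>?Q\<^esub> ?h y"
    using hom by (rule ring_hom_add)
  have hi: "\<And>x. x \<in> carrier R \<Longrightarrow> ?h (\<ominus> x) = \<ominus>\<^bsub>?Q\<^esub> ?h x"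
    using ring_hom_cring.hom_a_inv[OF homc] by blast
  have h1q: "?h \<one> = \<one>\<^bsub>?Q\<^esub>" using hom by (rule ring_hom_one)
  have aac: "\<alpha> \<otimes> a \<in> carrier R" using ab a by simp
  obtain E U where EU: "E \<in> carrier ?Q" "U \<in> Units ?Q" "E \<otimes>\<^bsub>?Q\<^esub> E = E" "?h (\<alpha> \<otimes> a) = E \<oplus>\<^bsub>?Q\<^esub> U"
    using cl hc[OF aac] unfolding clean_ring_def by blast
  obtain V where V: "V \<in> carrier ?Q" "U \<otimes>\<^bsub>?Q\<^esub> V = \<one>\<^bsub>?Q\<^esub>" "U \<in> carrier ?Q"
    using EU(2) unfolding Units_def by blast
  obtain f where f: "f \<in> carrier R" "E = ?h f" using EU(1) quot_carrier[OF c] by auto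
  obtain w where w: "w \<in> carrier R" "U = ?h w" using V(3) quot_carrier[OF c] by auto
  obtain v where v: "v \<in> carrier R" "V = ?h v" using V(1) quot_carrier[OF c] by auto
  have omf: "\<one> \<ominus> f \<in> carrier R" using f by simp
  have bbc: "\<beta> \<otimes> b \<in> carrier R" using ab b by simp
  have FE: "?h (\<one> \<ominus> f) \<oplus>\<^bsub>?Q\<^esub> E = \<one>\<^bsub>?Q\<^esub>"
  proof -
    have "(\<one> \<ominus> f) \<oplus> f = \<one>" using f by algebra
    thus ?thesis using ha[OF omf f(1)] f h1q by simp
  qed
  have YX: "?h (\<beta> \<otimes> b) \<oplus>\<^bsub>?Q\<^esub> ?h (\<alpha> \<otimes> a) = \<one>\<^bsub>?Q\<^esub>"
  proof -
    have "\<beta> \<otimes> b \<oplus> \<alpha> \<otimes> a = \<one>" using ab a b a_comm by (metis m_closed)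
    thus ?thesis using ha[OF bbc aac] h1q by simp
  qed
  note ex = cring.exch[OF Qc hc[OF aac] EU(1) V(3) V(1) hc[OF omf] hc[OF bbc] EU(4) EU(3) V(2) FE YX]
  have "?h (\<one> \<ominus> f) = ?h ((\<alpha> \<otimes> a) \<otimes> ((\<one> \<ominus> f) \<otimes> v))"
    using ex(1) hm aac omf v f by simp
  then obtain m1 where m1: "m1 \<in> carrier R" "(\<one> \<ominus> f) \<ominus> (\<alpha> \<otimes> a) \<otimes> ((\<one> \<ominus> f) \<otimes> v) = m1 \<otimes> c"
    using quot_eq[OF c omf] aac omf v by auto
  define B where "B = \<alpha> \<otimes> ((\<one> \<ominus> f) \<otimes> v)"
  have Bc: "B \<in> carrier R" using ab f v by (simp add: B_def)
  have "(\<alpha> \<otimes> a) \<otimes> ((\<one> \<ominus> f) \<otimes> v) = B \<otimes> a" using ab a f v unfolding B_def by algebra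
  hence hi1: "\<one> \<ominus> f \<ominus> B \<otimes> a = m1 \<otimes> c" using m1 by simp
  have "?h f = ?h ((\<beta> \<otimes> b) \<otimes> (\<ominus> (f \<otimes> v)))"
    using ex(2) hm hi bbc f v by simp
  then obtain m2 where m2: "m2 \<in> carrier R" "f \<ominus> (\<beta> \<otimes> b) \<otimes> (\<ominus> (f \<otimes> v)) = m2 \<otimes> c"
    using quot_eq[OF c f(1)] bbc f v by auto
  define D where "D = \<beta> \<otimes> (\<ominus> (f \<otimes> v))"
  have Dc: "D \<in> carrier R" using ab f v by (simp add: D_def)
  have "(\<beta> \<otimes> b) \<otimes> (\<ominus> (f \<otimes> v)) = D \<otimes> b" using ab b f v unfolding D_def by algebra
  hence hi2: "f \<ominus> D \<otimes> b = m2 \<otimes> c" using m2 by simp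
  have "?h (f \<otimes> f) = ?h f" using EU(3) hm f by simp
  then obtain k1 where k1: "k1 \<in> carrier R" "f \<otimes> f \<ominus> f = k1 \<otimes> c"
    using quot_eq[OF c m_closed[OF f(1) f(1)] f(1)] by auto
  obtain r \<rho>1 \<rho>2 f' c1 where R1: "r \<in> carrier R" "\<rho>1 \<in> carrier R" "\<rho>2 \<in> carrier R" "f' \<in> carrier R" "c1 \<in> carrier R"
    and hr: "r = \<rho>1 \<otimes> f \<oplus> \<rho>2 \<otimes> c" and hf: "f = f' \<otimes> r" and hc1: "c = c1 \<otimes> r"
    using bez2[OF bz f(1) c] by blast
  obtain s \<sigma>1 \<sigma>2 g' c2 where S1: "s \<in> carrier R" "\<sigma>1 \<in> carrier R" "\<sigma>2 \<in> carrier R" "g' \<in> carrier R" "c2 \<in> carrier R"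
    and hs: "s = \<sigma>1 \<otimes> (\<one> \<ominus> f) \<oplus> \<sigma>2 \<otimes> c" and hg: "\<one> \<ominus> f = g' \<otimes> s" and hc2: "c = c2 \<otimes> s"
    using bez2[OF bz omf c] by blast
  note carr = a b ab(1,2) c f(1) v(1) k1(1) m1(1) m2(1) R1 S1 Bc Dc
  have Eg: "f' \<otimes> r \<oplus> g' \<otimes> s = \<one>"
    apply (rule comb4[where cA = "\<ominus> \<one>" and cB = "\<ominus> \<one>" and cC = \<zero> and cD = \<zero>, OF hf hg refl[of \<zero>] refl[of \<zero>]])
     apply (use carr in algebra)
    using carr by simp_all
  define z where "z = \<ominus> (\<rho>1 \<otimes> \<sigma>1 \<otimes> k1) \<oplus> \<rho>1 \<otimes> \<sigma>2 \<otimes> f \<oplus> \<rho>2 \<otimes> \<sigma>1 \<otimes> (\<one> \<ominus> f) \<oplus> \<rho>2 \<otimes> \<sigma>2 \<otimes> c"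
  have zc: "z \<in> carrier R" using carr by (simp add: z_def)
  have rsz: "r \<otimes> s = z \<otimes> c"
    apply (rule comb4[where cA = s and cB = "\<rho>1 \<otimes> f \<oplus> \<rho>2 \<otimes> c" and cC = "\<ominus> (\<rho>1 \<otimes> \<sigma>1)" and cD = \<zero>, OF hr hs k1(2) refl[of \<zero>]])
     apply (use carr in \<open>unfold z_def; algebra\<close>)
    using carr zc by simp_all
  define t where "t = c2 \<otimes> f' \<oplus> c1 \<otimes> g'"
  have tc: "t \<in> carrier R" using carr by (simp add: t_def)
  have ct: "c = t \<otimes> (r \<otimes> s)"
    apply (rule comb4[where cA = "\<ominus> c" and cB = "f' \<otimes> r" and cC = "g' \<otimes> s" and cD = \<zero>, OF Eg hc2 hc1 refl[of \<zero>]])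
     apply (use carr in \<open>unfold t_def; algebra\<close>)
    using carr tc by simp_all
  have "c \<otimes> (t \<otimes> z) = t \<otimes> (z \<otimes> c)" using carr tc zc by algebra
  also have "\<dots> = c" using ct rsz by simp
  finally have "c \<otimes> (t \<otimes> z) = c \<otimes> \<one>" using c by simp
  hence tz: "t \<otimes> z = \<one>" using domain.m_lcancel[OF dom c0 c m_closed[OF tc zc] one_closed] by simp
  have trc: "t \<otimes> r \<in> carrier R" using tc carr by simp
  show "\<exists>r\<in>carrier R. \<exists>s\<in>carrier R. c = r \<otimes> s \<and>
            PIdl r <+> PIdl s = carrier R \<and>
            PIdl r <+> PIdl a = carrier R \<and>
            PIdl s <+> PIdl b = carrier R"
  proof (intro bexI conjI)
    show "c = (t \<otimes> r) \<otimes> s" using ct carr tc by (simp add: m_assoc)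
    have "(f' \<otimes> z) \<otimes> (t \<otimes> r) \<oplus> g' \<otimes> s = \<one>"
      apply (rule comb4[where cA = "f' \<otimes> r" and cB = "\<one>" and cC = \<zero> and cD = \<zero>, OF tz Eg refl[of \<zero>] refl[of \<zero>]])
       apply (use carr tc zc in algebra)
      using carr tc zc by simp_all
    show "PIdl (t \<otimes> r) <+> PIdl s = carrier R"
    proof -
      have "f' \<otimes> z \<in> carrier R" using carr zc by simp
      thus ?thesis unfolding comax_iff[OF trc S1(1)] using \<open>(f' \<otimes> z) \<otimes> (t \<otimes> r) \<oplus> g' \<otimes> s = \<one>\<close> carr by blast
    qed
    have "((m1 \<otimes> c1 \<oplus> f') \<otimes> z) \<otimes> (t \<otimes> r) \<oplus> B \<otimes> a = \<one>"
      apply (rule comb4[where cA = "(m1 \<otimes> c1 \<oplus> f') \<otimes> r" and cB = "\<ominus> \<one>" and cC = "\<ominus> m1" and cD = "\<ominus> \<one>", OF tz hi1 hc1 hf])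
       apply (use carr tc zc in algebra)
      using carr tc zc by simp_all
    show "PIdl (t \<otimes> r) <+> PIdl a = carrier R"
    proof -
      have "(m1 \<otimes> c1 \<oplus> f') \<otimes> z \<in> carrier R" using carr zc by simp
      thus ?thesis unfolding comax_iff[OF trc a] using \<open>((m1 \<otimes> c1 \<oplus> f') \<otimes> z) \<otimes> (t \<otimes> r) \<oplus> B \<otimes> a = \<one>\<close> carr by blast
    qed
    have "(m2 \<otimes> c2 \<oplus> g') \<otimes> s \<oplus> D \<otimes> b = \<one>"
      apply (rule comb4[where cA = "\<ominus> \<one>" and cB = "\<ominus> m2" and cC = "\<ominus> \<one>" and cD = \<zero>, OF hi2 hc2 hg refl[of \<zero>]])
       apply (use carr in algebra)
      using carr by simp_all
    show "PIdl s <+> PIdl b = carrier R"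
    proof -
      have "m2 \<otimes> c2 \<oplus> g' \<in> carrier R" using carr by simp
      thus ?thesis unfolding comax_iff[OF S1(1) b] using \<open>(m2 \<otimes> c2 \<oplus> g') \<otimes> s \<oplus> D \<otimes> b = \<one>\<close> carr by blast
    qed
  qed (use trc S1 in auto)
qed

end


theorem lemma3p6:
  fixes R (structure) and c
  assumes "bezout_ring R"
    and "c \<in> carrier R" and "c \<noteq> \<zero>\<^bsub>R\<^esub>"
  shows "(cond1 R c \<longrightarrow> clean_ring (R Quot (cgenideal R c))) \<and>
         (domain R \<longrightarrow> (cond1 R c \<longleftrightarrow> clean_ring (R Quot (cgenideal R c))))"
proof -
  have cr: "cring R" using assms(1) unfolding bezout_ring_def by blast
  show ?thesis
    using cring.part1[OF cr assms(2)] cring.part2[OF cr assms(2) assms(3) _ assms(1)] by blast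
qed

end
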